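(* Let $d\ge 1$ and let $\beta=(\beta_1,\ldots,\beta_{d+1}) \in \mathbb{R}^{d+1}$ satisfy $\beta_1 \ge \beta_2 \ge \cdots \ge \beta_{d+1} \ge 0$, $\beta_1+\cdots+\beta_{d+1}=1$, and, for every $t \in \{1,\dots,d\}$, the inequality \[ \mathrm{PS}(t):\quad \prod_{i=1}^t (\beta_i - \beta_{d+1}) \le \sum_{j=t+1}^{d+1} (\beta_j - \beta_{d+1}) + (d+1)\beta_{d+1}. \] Then: (a) $\beta_t > 0$ for every $t \in \{1,\dots,d+1\}$; (b) for every $t \in \{1,\dots,d\}$, at least one of the inequalities $\beta_t \ge \beta_{t+1}$ and $\mathrm{PS}(t)$ is strict; (c) if for some $\ell \in \{1,\dots,d\}$ the inequality $\mathrm{PS}(i)$ holds with equality for every $i \in \{1,\dots,\ell\}$, then $\beta_i = \frac{1}{s_i} + \beta_{d+1}$ for every $i \in \{1,\dots,\ell\}$.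
   Context: The Sylvester sequence is defined by $s_1 := 2$ and $s_i := 1 + s_1 s_2 \cdots s_{i-1}$ for $i \ge 2$. *)

theory Defs
  imports Complex_Main
begin

(* Sylvester sequence, 1-indexed: s 1 = 2, s i = 1 + s 1 * ... * s (i-1) for i >= 2.
   The value at index 0 is irrelevant (set to 2 by convention). *)
function sylvester :: "nat \<Rightarrow> nat" where
  "sylvester i = (if i \<le> 1 then 2 else 1 + (\<Prod>j\<in>{1..<i}. sylvester j))"
  by auto
termination
  by (relation "measure id") auto

definition PS :: "nat \<Rightarrow> (nat \<Rightarrow> real) \<Rightarrow> nat \<Rightarrow> bool" where
  "PS d \<beta> t \<longleftrightarrow>
     (\<Prod>i=1..t. \<beta> i - \<beta> (d+1)) \<le> (\<Sum>j=t+1..d+1. \<beta> j - \<beta> (d+1)) + real (d+1) * \<beta> (d+1)"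

definition PS_eq :: "nat \<Rightarrow> (nat \<Rightarrow> real) \<Rightarrow> nat \<Rightarrow> bool" where
  "PS_eq d \<beta> t \<longleftrightarrow>
     (\<Prod>i=1..t. \<beta> i - \<beta> (d+1)) = (\<Sum>j=t+1..d+1. \<beta> j - \<beta> (d+1)) + real (d+1) * \<beta> (d+1)"

definition PS_strict :: "nat \<Rightarrow> (nat \<Rightarrow> real) \<Rightarrow> nat \<Rightarrow> bool" where
  "PS_strict d \<beta> t \<longleftrightarrow>
     (\<Prod>i=1..t. \<beta> i - \<beta> (d+1)) < (\<Sum>j=t+1..d+1. \<beta> j - \<beta> (d+1)) + real (d+1) * \<beta> (d+1)"

lemma sylvester_1: "sylvester 1 = 2" by simp

end

theory Submission
  imports Defs
begin

lemma sylv_rec: "i \<ge> 1 \<Longrightarrow> real (sylvester i) = 1 + (\<Prod>j\<in>{1..<i}. real (sylvester j))"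
proof (cases "i = 1")
  case True then show ?thesis by simp
next
  case False
  assume "i \<ge> 1"
  with False have "\<not> i \<le> 1" by simp
  then have "sylvester i = 1 + (\<Prod>j\<in>{1..<i}. sylvester j)"
    by (subst sylvester.simps) simp
  then show ?thesis by simp
qed

lemma sylv_pos: "real (sylvester i) > 0"
  by (subst sylvester.simps) (auto simp del: sylvester.simps)

theorem lemma2p1:
  fixes d :: nat and \<beta> :: "nat \<Rightarrow> real"
  assumes "d \<ge> 1"
    and mono: "\<And>i. 1 \<le> i \<Longrightarrow> i \<le> d \<Longrightarrow> \<beta> i \<ge> \<beta> (i+1)"
    and nonneg: "\<beta> (d+1) \<ge> 0"
    and sum1: "(\<Sum>i=1..d+1. \<beta> i) = 1"
    and ps: "\<And>t. 1 \<le> t \<Longrightarrow> t \<le> d \<Longrightarrow> PS d \<beta> t"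
  shows "(\<forall>t\<in>{1..d+1}. \<beta> t > 0)
    \<and> (\<forall>t\<in>{1..d}. \<beta> t > \<beta> (t+1) \<or> PS_strict d \<beta> t)
    \<and> (\<forall>l\<in>{1..d}. (\<forall>i\<in>{1..l}. PS_eq d \<beta> i) \<longrightarrow>
          (\<forall>i\<in>{1..l}. \<beta> i = 1 / real (sylvester i) + \<beta> (d+1)))"
proof -
  define b where "b = \<beta> (d+1)"
  define g where "g i = \<beta> i - b" for i
  define P where "P t = (\<Prod>i=1..t. g i)" for t
  define S where "S t = (\<Sum>i=1..t. g i)" for t
  have P0: "P 0 = 1" and S0: "S 0 = 0" by (simp_all add: P_def S_def)
  have PSuc: "P (Suc t) = P t * g (Suc t)" for t by (simp add: P_def prod.cl_ivl_Suc)
  have SSuc: "S (Suc t) = S t + g (Suc t)" for t by (simp add: S_def sum.cl_ivl_Suc)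
  have monoij: "\<beta> j \<le> \<beta> i" if "1 \<le> i" "i \<le> j" "j \<le> d+1" for i j
  proof -
    have "i \<le> j \<longrightarrow> j \<le> d+1 \<longrightarrow> \<beta> j \<le> \<beta> i" for j
    proof (induction j)
      case 0 then show ?case using that by simp
    next
      case (Suc n)
      show ?case
      proof (intro impI)
        assume a: "i \<le> Suc n" "Suc n \<le> d+1"
        show "\<beta> (Suc n) \<le> \<beta> i"
        proof (cases "i = Suc n")
          case True then show ?thesis by simp
        next
          case False
          then have "i \<le> n" using a by simp
          then have "\<beta> (n+1) \<le> \<beta> n" using mono[of n] a that by simp
          with Suc a \<open>i \<le> n\<close> show ?thesis by simp
        qed
      qed
    qed
    then show ?thesis using that by simp
  qed
  have gnn: "g j \<ge> 0" if "1 \<le> j" "j \<le> d+1" for j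
    using monoij[of j "d+1"] that by (simp add: g_def b_def)
  have Pnn: "P t \<ge> 0" if "t \<le> d+1" for t
    unfolding P_def using gnn that by (intro prod_nonneg) auto
  have split: "(\<Sum>j=t+1..d+1. g j) + real (d+1) * b = 1 - S t" if "t \<le> d+1" for t
  proof -
    have "(\<Sum>i=1..d+1. \<beta> i) = (\<Sum>i=1..d+1. g i + b)" by (simp add: g_def)
    also have "\<dots> = (\<Sum>i=1..d+1. g i) + real (d+1) * b" by (simp add: sum.distrib)
    also have "(\<Sum>i=1..d+1. g i) = S t + (\<Sum>j=t+1..d+1. g j)"
    proof -
      have "(\<Sum>i=1..t + (d+1-t). g i) = (\<Sum>i=1..t. g i) + (\<Sum>i=t+1..t + (d+1-t). g i)"
        by (rule sum.ub_add_nat) simp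
      then show ?thesis using that by (simp add: S_def)
    qed
    finally show ?thesis using sum1 by simp
  qed
  have PSiff: "PS d \<beta> t \<longleftrightarrow> P t + S t \<le> 1" if "t \<le> d+1" for t
    using split[OF that] unfolding PS_def P_def[symmetric] g_def[symmetric] b_def[symmetric]
    by (simp add: P_def) linarith
  have PSeqiff: "PS_eq d \<beta> t \<longleftrightarrow> P t + S t = 1" if "t \<le> d+1" for t
    using split[OF that] unfolding PS_eq_def g_def[symmetric] b_def[symmetric]
    by (simp add: P_def) linarith
  have PSstiff: "PS_strict d \<beta> t \<longleftrightarrow> P t + S t < 1" if "t \<le> d+1" for t
    using split[OF that] unfolding PS_strict_def g_def[symmetric] b_def[symmetric]
    by (simp add: P_def) linarith
  have Q: "P t + S t \<le> 1" if "t \<le> d" for t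
  proof (cases "t = 0")
    case True then show ?thesis by (simp add: P0 S0)
  next
    case False then show ?thesis using ps[of t] that PSiff[of t] by simp
  qed
  have bpos: "b > 0"
  proof (rule ccontr)
    assume "\<not> b > 0"
    then have b0: "b = 0" using nonneg b_def by simp
    have ex: "\<exists>k. 1 \<le> k \<and> k \<le> d+1 \<and> g k = 0" using b0 by (intro exI[of _ "d+1"]) (simp add: g_def b_def)
    define k where "k = (LEAST k. 1 \<le> k \<and> k \<le> d+1 \<and> g k = 0)"
    have k: "1 \<le> k" "k \<le> d+1" "g k = 0" using LeastI_ex[OF ex] unfolding k_def[symmetric] by auto
    have kmin: "g j \<noteq> 0" if "1 \<le> j" "j < k" for j
      using not_less_Least[of j "\<lambda>k. 1 \<le> k \<and> k \<le> d+1 \<and> g k = 0"] that k unfolding k_def[symmetric] by auto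
    have gz: "g j = 0" if "k \<le> j" "j \<le> d+1" for j
      using monoij[of k j] that k gnn[of j] by (simp add: g_def)
    have tail: "(\<Sum>j=k..d+1. g j) + real (d+1) * b = 0" using gz b0 by simp
    show False
    proof (cases "k = 1")
      case True
      have "(\<Sum>i=1..d+1. \<beta> i) = 0" using gz True b0 by (simp add: g_def)
      with sum1 show False by simp
    next
      case False
      then obtain m where m: "k = Suc m" "m \<ge> 1" using k by (cases k) auto
      have "P m > 0" unfolding P_def
      proof (intro prod_pos)
        fix j assume j: "j \<in> {1..m}"
        then have "g j \<noteq> 0" using kmin m by simp
        moreover have "g j \<ge> 0" using gnn j m k by simp
        ultimately show "g j > 0" by simp
      qed
      moreover have "PS d \<beta> m" using ps[of m] m k by simp
      ultimately show False using tail m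
        unfolding PS_def g_def[symmetric] b_def[symmetric] P_def[symmetric] by simp
    qed
  qed
  have A: "\<forall>t\<in>{1..d+1}. \<beta> t > 0"
  proof
    fix t assume "t \<in> {1..d+1}"
    then have "\<beta> (d+1) \<le> \<beta> t" using monoij[of t "d+1"] by simp
    then show "\<beta> t > 0" using bpos b_def by simp
  qed
  have Slt: "S t < 1" if "t \<le> d+1" for t
  proof -
    have "(\<Sum>j=t+1..d+1. g j) \<ge> 0" using gnn by (intro sum_nonneg) auto
    moreover have "real (d+1) * b > 0" using bpos by simp
    ultimately show ?thesis using split[OF that] by linarith
  qed
  have B: "\<forall>t\<in>{1..d}. \<beta> t > \<beta> (t+1) \<or> PS_strict d \<beta> t"
  proof (intro ballI, rule ccontr)
    fix t assume t: "t \<in> {1..d}" and ng: "\<not> (\<beta> t > \<beta> (t+1) \<or> PS_strict d \<beta> t)"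
    have eqb: "\<beta> t = \<beta> (t+1)" using ng mono[of t] t by auto
    then have eqg: "g t = g (t+1)" by (simp add: g_def)
    have eq: "P t + S t = 1" using ng PSstiff[of t] Q[of t] t by auto
    obtain m where m: "t = Suc m" using t by (cases t) auto
    have Ppos: "P t > 0" using eq Slt[of t] t by simp
    have xnn: "g t \<ge> 0" using gnn t by simp
    have pnn: "P m \<ge> 0" using Pnn m t by simp
    have x: "g t > 0" and p: "P m > 0" using Ppos PSuc[of m] m xnn pnn
      by (metis less_eq_real_def mult_zero_left mult_zero_right less_irrefl)+
    show False
    proof (cases "t = d")
      case True
      then have "g t = 0" using eqg by (simp add: g_def b_def)
      with x show False by simp
    next
      case False
      then have "t + 1 \<le> d" using t by simp
      then have Q1: "P (Suc t) + S (Suc t) \<le> 1" using Q by simp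
      have Q0: "P m + S m \<le> 1" using Q m t by simp
      define pp where "pp = P m"
      define xx where "xx = g t"
      define ss where "ss = S m"
      have e1: "pp * xx + ss + xx = 1" using eq m PSuc SSuc by (simp add: pp_def xx_def ss_def)
      have e2: "pp * xx * xx + ss + xx + xx \<le> 1" using Q1 m PSuc SSuc eqg
        by (simp add: pp_def xx_def ss_def)
      have e3: "pp + ss \<le> 1" using Q0 by (simp add: pp_def ss_def)
      have xp: "xx > 0" "pp > 0" using x p by (simp_all add: xx_def pp_def)
      have f1: "xx * (pp * xx + 1 - pp) \<le> 0" using e1 e2 by (simp add: algebra_simps)
      have f2: "pp * xx + 1 \<le> pp"
        using f1 xp by (smt (verit) mult_pos_pos)
      have f3: "xx * (pp + 1) \<ge> pp" using e1 e3 by (simp add: algebra_simps)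
      have "pp * (xx * (pp + 1)) \<ge> pp * pp" using f3 xp by (simp add: mult_left_mono)
      moreover have "(pp * xx + 1) * (pp + 1) \<le> pp * (pp + 1)" using f2 xp by (simp add: mult_right_mono)
      ultimately show False by (simp add: algebra_simps)
    qed
  qed
  have C: "\<forall>l\<in>{1..d}. (\<forall>i\<in>{1..l}. PS_eq d \<beta> i) \<longrightarrow>
          (\<forall>i\<in>{1..l}. \<beta> i = 1 / real (sylvester i) + \<beta> (d+1))"
  proof (intro ballI impI)
    fix l i assume l: "l \<in> {1..d}" and eqs: "\<forall>i\<in>{1..l}. PS_eq d \<beta> i" and i: "i \<in> {1..l}"
    have E: "P i + S i = 1" if "i \<le> l" for i
    proof (cases "i = 0")
      case True then show ?thesis by (simp add: P0 S0)
    next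
      case False then show ?thesis using eqs that l PSeqiff[of i] by simp
    qed
    have claim: "i \<le> l \<longrightarrow> P i = 1 / (\<Prod>j=1..i. real (sylvester j)) \<and>
                  (i \<ge> 1 \<longrightarrow> g i = 1 / real (sylvester i))" for i
    proof (induction i)
      case 0 then show ?case by (simp add: P0)
    next
      case (Suc n)
      show ?case
      proof
        assume le: "Suc n \<le> l"
        define q where "q = (\<Prod>j=1..n. real (sylvester j))"
        have qpos: "q > 0" unfolding q_def using sylv_pos by (intro prod_pos) auto
        have Pn: "P n = 1 / q" using Suc le q_def by simp
        have sy: "real (sylvester (Suc n)) = 1 + q"
          using sylv_rec[of "Suc n"] by (simp add: q_def atLeastLessThanSuc_atLeastAtMost)
        have e1: "P n * g (Suc n) + S n + g (Suc n) = 1" using E[of "Suc n"] le PSuc SSuc by simp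
        have e0: "P n + S n = 1" using E[of n] le by simp
        have "g (Suc n) * (P n + 1) = P n" using e1 e0 by (simp add: algebra_simps)
        then have "g (Suc n) * (1 + q) = 1" using Pn qpos by (simp add: field_simps)
        then have gS: "g (Suc n) = 1 / real (sylvester (Suc n))" using sy qpos
          by (simp add: field_simps)
        have "P (Suc n) = 1 / (\<Prod>j=1..Suc n. real (sylvester j))"
          using PSuc[of n] Pn gS sy qpos by (simp add: prod.cl_ivl_Suc q_def)
        then show "P (Suc n) = 1 / (\<Prod>j=1..Suc n. real (sylvester j)) \<and>
            (Suc n \<ge> 1 \<longrightarrow> g (Suc n) = 1 / real (sylvester (Suc n)))" using gS by simp
      qed
    qed
    then have "g i = 1 / real (sylvester i)" using i by simp
    then show "\<beta> i = 1 / real (sylvester i) + \<beta> (d+1)" by (simp add: g_def b_def)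
  qed
  show ?thesis using A B C by blast
qed

end
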